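(* Let $\mathbf{S}=(1^{n_1},\ast^{m_1},\ldots,1^{n_r},\ast^{m_r})$ with $r\ge1$, all $n_j,m_j\ge1$ and $n_1+\cdots+n_r=m_1+\cdots+m_r$, and let $h=h(\mathbf{S})$ be its lattice path height. Then \[ |NC_2(\mathbf{S})|\le C^{(h)}_r\le\frac{r^{r-1}}{r!}(1+h)^{r-1}, \qquad\text{where } C^{(h)}_r=\frac{1}{hr+1}\binom{(h+1)r}{r}. \]
   Context: $1^k$ denotes $k$ consecutive entries $1$ (similarly $\ast^k$); $r$ is the number of runs of $\mathbf{S}$. $NC_2(\mathbf{S})$ is the set of non-crossing pairings of the positions of $\mathbf{S}$ in which each pair joins a $1$ with a $\ast$. The lattice path of $\mathbf{S}$ starts at $(0,0)$ and, reading $\mathbf{S}$ left to right, takes a step $(1,1)$ for each $1$ and $(1,-1)$ for each $\ast$; the lattice path height $h(\mathbf{S})$ is the maximum minus the minimum of the vertical coordinates of the vertices of this path (the number of distinct vertical levels traversed by steps). *)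

theory Defs
  imports Complex_Main
begin

text \<open>Words over the alphabet {1, *}: True encodes 1, False encodes *.\<close>

definition run_word :: "nat \<Rightarrow> (nat \<Rightarrow> nat) \<Rightarrow> (nat \<Rightarrow> nat) \<Rightarrow> bool list" where
  "run_word r n m = concat (map (\<lambda>j. replicate (n j) True @ replicate (m j) False) [0..<r])"

definition NC2 :: "bool list \<Rightarrow> (nat \<times> nat) set set" where
  "NC2 S = {P. (\<forall>(i,j)\<in>P. i < j \<and> j < length S \<and> S ! i \<noteq> S ! j)
              \<and> (\<forall>k < length S. \<exists>!p. p \<in> P \<and> (fst p = k \<or> snd p = k))
              \<and> (\<forall>(a,b)\<in>P. \<forall>(c,d)\<in>P. \<not> (a < c \<and> c < b \<and> b < d))}"

definition path_pos :: "bool list \<Rightarrow> nat \<Rightarrow> int" where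
  "path_pos S k = (\<Sum>b\<leftarrow>take k S. if b then 1 else -1)"

definition lp_height :: "bool list \<Rightarrow> nat" where
  "lp_height S = nat (Max (path_pos S ` {0..length S}) - Min (path_pos S ` {0..length S}))"

definition fuss_catalan :: "nat \<Rightarrow> nat \<Rightarrow> real" where
  "fuss_catalan h r = real (((h + 1) * r) choose r) / real (h * r + 1)"

end

theory Submission
  imports Defs
begin


fun G :: "nat \<Rightarrow> nat \<Rightarrow> nat \<Rightarrow> nat" where
  "G h 0 r = (if r = 0 then 1 else 0)"
| "G h (Suc q) 0 = 1"
| "G h (Suc q) (Suc r) = G h q (Suc r) + G h (Suc q + h) r"

lemma G_0_right[simp]: "G h q 0 = 1"
  by (cases q) auto

lemma G_mono_q: "G h q r \<le> G h (Suc q) r"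
  by (cases r) auto

lemma G_mono_q': "q \<le> q' \<Longrightarrow> G h q r \<le> G h q' r"
  by (induction q' rule: dec_induct) (auto intro: order_trans[OF _ G_mono_q])

lemma G_1_Suc: "G h 1 (Suc r) = G h (Suc h) r"
  by simp

lemma G_conv: "G h (a + b) r = (\<Sum>j\<le>r. G h a j * G h b (r - j))"
proof (induction r arbitrary: a)
  case 0
  then show ?case by simp
next
  case (Suc r)
  note IHr = Suc.IH
  show ?case
  proof (induction a)
    case 0
    show ?case by (simp add: sum.atMost_Suc_shift del: sum.atMost_Suc)
  next
    case (Suc a)
    have "G h (Suc a + b) (Suc r) = G h (a + b) (Suc r) + G h (Suc a + h + b) r"
      by (simp add: add.commute add.left_commute)
    also have "\<dots> = (\<Sum>j\<le>Suc r. G h a j * G h b (Suc r - j)) + (\<Sum>j\<le>r. G h (Suc a + h) j * G h b (r - j))"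
      using Suc.IH IHr[of "Suc a + h"] by (simp add: algebra_simps)
    also have "(\<Sum>j\<le>Suc r. G h a j * G h b (Suc r - j)) = G h b (Suc r) + (\<Sum>j\<le>r. G h a (Suc j) * G h b (r - j))"
      by (subst sum.atMost_Suc_shift) simp
    also have "(\<Sum>j\<le>Suc r. G h (Suc a) j * G h b (Suc r - j)) = G h b (Suc r) + (\<Sum>j\<le>r. G h (Suc a) (Suc j) * G h b (r - j))"
      by (subst sum.atMost_Suc_shift) simp
    moreover have "(\<Sum>j\<le>r. G h (Suc a) (Suc j) * G h b (r - j)) = (\<Sum>j\<le>r. G h a (Suc j) * G h b (r - j)) + (\<Sum>j\<le>r. G h (Suc a + h) j * G h b (r - j))"
      by (simp add: sum.distrib[symmetric] algebra_simps)
    ultimately show ?case by simp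
  qed
qed

lemma G_closed: "G h q r * ((h+1)*r + q) = q * (((h+1)*r + q) choose r)"
proof (induction r arbitrary: q)
  case 0
  then show ?case by simp
next
  case (Suc r)
  note IHr = Suc.IH
  show ?case
  proof (induction q)
    case 0
    then show ?case by simp
  next
    case (Suc q)
    define N where "N = (h+1)*(Suc r) + q"
    define c where "c = N choose r"
    define d where "d = N choose Suc r"
    have Npos: "N \<ge> Suc r" unfolding N_def by simp
    have rel: "Suc r * d = (N - r) * c"
      unfolding c_def d_def using binomial_absorption[of r N] binomial_absorb_comp[of N r] by simp
    have IH1: "G h q (Suc r) * N = q * d" using Suc.IH unfolding N_def d_def by simp
    have IH2: "G h (Suc q + h) r * N = (Suc q + h) * c"
      using IHr[of "Suc q + h"] unfolding N_def c_def by (simp add: algebra_simps)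
    have C: "(h+1)*(Suc r) + Suc q choose Suc r = c + d"
      unfolding c_def d_def N_def by simp
    have rel': "real (Suc r) * real d = (real N - real r) * real c"
      using rel Npos by (metis of_nat_diff of_nat_mult Suc_leD)
    have IH1': "real (G h q (Suc r)) * real N = real q * real d" using IH1 by (metis of_nat_mult)
    have IH2': "real (G h (Suc q + h) r) * real N = (real q + 1 + real h) * real c"
      using IH2 by (metis of_nat_mult of_nat_add of_nat_Suc add.commute)
    have rel'': "(real r + 1) * real d = (real N - real r) * real c" using rel' by (simp add: add.commute)
    have Nr: "real N = (real h + 1) * (real r + 1) + real q" unfolding N_def by (simp add: algebra_simps)
    have key: "real N * ((real (G h q (Suc r)) + real (G h (Suc q + h) r)) * (real N + 1))
       = real N * ((real q + 1) * (real c + real d))"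
    proof -
      have "real N * ((real (G h q (Suc r)) + real (G h (Suc q + h) r)) * (real N + 1))
          = (real N + 1) * (real q * real d + (real q + 1 + real h) * real c)"
        using IH1' IH2' by (simp add: algebra_simps)
      also have "\<dots> = real N * ((real q + 1) * (real c + real d))"
        using rel'' Nr by algebra
      finally show ?thesis .
    qed
    have "(real (G h q (Suc r)) + real (G h (Suc q + h) r)) * (real N + 1) = (real q + 1) * (real c + real d)"
      using key Npos by simp
    hence "real (G h (Suc q) (Suc r) * ((h + 1) * Suc r + Suc q)) = real (Suc q * ((h + 1) * Suc r + Suc q choose Suc r))"
      unfolding C by (simp add: N_def algebra_simps)
    thus ?case by (simp only: of_nat_eq_iff)
  qed
qed

lemma G_fuss: "real (G h 1 r) = fuss_catalan h r"
proof -
  have a: "G h 1 r * ((h+1)*r + 1) = ((h+1)*r + 1) choose r" using G_closed[of h 1 r] by simp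
  have b: "(((h+1)*r + 1) - r) * (((h+1)*r + 1) choose r) = ((h+1)*r + 1) * ((h+1)*r choose r)"
    using binomial_absorb_comp[of "(h+1)*r + 1" r] by simp
  have c: "((h+1)*r + 1) - r = h*r + 1" by (simp add: algebra_simps)
  have "((h+1)*r + 1) * (G h 1 r * (h*r+1)) = ((h+1)*r + 1) * ((h+1)*r choose r)"
    using a b c by (metis mult.commute mult.assoc)
  hence "G h 1 r * (h*r+1) = ((h+1)*r choose r)"
    by (simp only: mult_cancel_left) simp
  hence "real (G h 1 r) * real (h*r+1) = real ((h+1)*r choose r)"
    by (metis of_nat_mult)
  moreover have "real (h*r+1) > 0" by (simp del: of_nat_add of_nat_mult)
  ultimately show ?thesis unfolding fuss_catalan_def by (simp add: eq_divide_eq)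
qed

lemma fuss_bound:
  assumes "r \<ge> 1"
  shows "fuss_catalan h r \<le> real r ^ (r - 1) / fact r * (1 + real h) ^ (r - 1)"
proof -
  obtain k where k: "r = Suc k" using assms by (cases r) auto
  define n where "n = (h+1)*r"
  have rel: "Suc k * (n choose Suc k) = (n - k) * (n choose k)"
    using binomial_absorption[of k n] binomial_absorb_comp[of n k] by simp
  have nk: "n - k = h*r + 1" unfolding n_def k by simp
  have f1: "fuss_catalan h r = real (n choose k) / real r"
  proof -
    have "real r * real (n choose r) = real (h*r+1) * real (n choose k)"
      using rel nk k by (metis of_nat_mult)
    moreover have "real (h*r+1) > 0" by (simp del: of_nat_add of_nat_mult)
    moreover have "real r > 0" using assms by simp
    ultimately show ?thesis unfolding fuss_catalan_def n_def[symmetric]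
      by (simp add: field_simps)
  qed
  have f2: "real (n choose k) * fact k \<le> real n ^ k"
    using binomial_fact_pow[of n k] by (metis of_nat_fact of_nat_le_iff of_nat_mult of_nat_power)
  have "real (n choose k) \<le> real n ^ k / fact k"
    using f2 by (simp add: field_simps)
  hence "real (n choose k) / real r \<le> real n ^ k / fact k / real r"
    using assms by (intro divide_right_mono) auto
  also have "\<dots> = real r ^ k / fact r * (1 + real h) ^ k"
  proof -
    have "real n ^ k = real r ^ k * (1 + real h) ^ k"
    proof -
      have "real n = real r * (1 + real h)" unfolding n_def by (simp add: algebra_simps)
      thus ?thesis by (simp add: power_mult_distrib)
    qed
    moreover have "(fact r :: real) = real r * fact k" unfolding k by simp
    ultimately show ?thesis using assms by (simp add: field_simps)
  qed
  finally show ?thesis using f1 k by simp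
qed




definition seg :: "nat \<Rightarrow> nat \<Rightarrow> (nat \<times> nat) set \<Rightarrow> (nat \<times> nat) set" where
  "seg off len P = (\<lambda>(a,b). (a - off, b - off)) ` {p\<in>P. off \<le> fst p \<and> snd p < off + len}"

definition unseg :: "nat \<Rightarrow> (nat \<times> nat) set \<Rightarrow> (nat \<times> nat) set" where
  "unseg off Q = (\<lambda>(a,b). (a + off, b + off)) ` Q"

lemma NC2D:
  assumes "P \<in> NC2 w"
  shows "\<And>a b. (a,b) \<in> P \<Longrightarrow> a < b \<and> b < length w \<and> w ! a \<noteq> w ! b"
    and "\<And>k. k < length w \<Longrightarrow> \<exists>!p. p \<in> P \<and> (fst p = k \<or> snd p = k)"
    and "\<And>a b c d. (a,b) \<in> P \<Longrightarrow> (c,d) \<in> P \<Longrightarrow> \<not> (a < c \<and> c < b \<and> b < d)"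
proof -
  fix a b assume "(a,b) \<in> P" then show "a < b \<and> b < length w \<and> w ! a \<noteq> w ! b"
    using assms unfolding NC2_def by blast
next
  fix k assume "k < length w" then show "\<exists>!p. p \<in> P \<and> (fst p = k \<or> snd p = k)"
    using assms unfolding NC2_def by blast
next
  fix a b c d assume "(a,b) \<in> P" "(c,d) \<in> P" then show "\<not> (a < c \<and> c < b \<and> b < d)"
    using assms unfolding NC2_def by blast
qed

lemma NC2I:
  assumes "\<And>a b. (a,b) \<in> P \<Longrightarrow> a < b \<and> b < length w \<and> w ! a \<noteq> w ! b"
    and "\<And>k. k < length w \<Longrightarrow> \<exists>!p. p \<in> P \<and> (fst p = k \<or> snd p = k)"
    and "\<And>a b c d. (a,b) \<in> P \<Longrightarrow> (c,d) \<in> P \<Longrightarrow> \<not> (a < c \<and> c < b \<and> b < d)"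
  shows "P \<in> NC2 w"
  using assms unfolding NC2_def by auto

lemma NC2_unique:
  assumes "P \<in> NC2 w" "p \<in> P" "q \<in> P" "fst p = k \<or> snd p = k" "fst q = k \<or> snd q = k"
  shows "p = q"
proof -
  have "k < length w" using assms(2,4) NC2D(1)[OF assms(1), of "fst p" "snd p"] by auto
  then show ?thesis using NC2D(2)[OF assms(1)] assms(2-5) by blast
qed

lemma NC2_finite: "finite (NC2 w)"
proof -
  have "NC2 w \<subseteq> Pow ({..<length w} \<times> {..<length w})"
    using NC2D(1) by fastforce
  then show ?thesis by (rule finite_subset) auto
qed

lemma NC2_Nil: "NC2 [] = {{}}"
  unfolding NC2_def by auto

lemma seg_NC2:
  assumes P: "P \<in> NC2 w" and len: "off + len \<le> length w"
    and closed: "\<And>a b. (a,b) \<in> P \<Longrightarrow> (off \<le> a \<and> a < off + len) \<or> (off \<le> b \<and> b < off + len) \<Longrightarrow> off \<le> a \<and> b < off + len"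
  shows "seg off len P \<in> NC2 (take len (drop off w))"
proof (rule NC2I)
  have L: "length (take len (drop off w)) = len" using len by simp
  fix x y assume "(x,y) \<in> seg off len P"
  then obtain a b where ab: "(a,b) \<in> P" "off \<le> a" "b < off + len" "x = a - off" "y = b - off"
    unfolding seg_def by auto
  have "a < b \<and> b < length w \<and> w ! a \<noteq> w ! b" using NC2D(1)[OF P ab(1)] .
  then show "x < y \<and> y < length (take len (drop off w)) \<and> take len (drop off w) ! x \<noteq> take len (drop off w) ! y"
    using ab L len by (auto simp: nth_take nth_drop)
next
  fix k assume k: "k < length (take len (drop off w))"
  hence k': "k < len" "off + k < length w" using len by auto
  obtain p where p: "p \<in> P" "fst p = off + k \<or> snd p = off + k" using NC2D(2)[OF P k'(2)] by blast
  obtain a b where pab: "p = (a,b)" by (cases p)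
  have in1: "off \<le> a \<and> b < off + len" using closed[of a b] p pab k' by auto
  have mem: "(a - off, b - off) \<in> seg off len P" unfolding seg_def using p pab in1 by force
  show "\<exists>!q. q \<in> seg off len P \<and> (fst q = k \<or> snd q = k)"
  proof (rule ex1I[of _ "(a - off, b - off)"])
    show "(a - off, b - off) \<in> seg off len P \<and> (fst (a - off, b - off) = k \<or> snd (a - off, b - off) = k)"
      using mem p pab in1 by auto
  next
    fix q assume q: "q \<in> seg off len P \<and> (fst q = k \<or> snd q = k)"
    then obtain a' b' where ab': "(a',b') \<in> P" "off \<le> a'" "b' < off + len" "q = (a' - off, b' - off)"
      unfolding seg_def by auto
    have "a' < b'" using NC2D(1)[OF P ab'(1)] by simp
    hence "fst (a',b') = off + k \<or> snd (a',b') = off + k" using q ab' by auto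
    hence "(a',b') = p" using NC2_unique[OF P ab'(1) p(1)] p(2) by blast
    then show "q = (a - off, b - off)" using ab' pab by simp
  qed
next
  fix x y u v assume xy: "(x,y) \<in> seg off len P" and uv: "(u,v) \<in> seg off len P"
  then obtain a b c d where "(a,b) \<in> P" "off \<le> a" "x = a - off" "y = b - off"
      "(c,d) \<in> P" "off \<le> c" "u = c - off" "v = d - off"
    unfolding seg_def by auto
  moreover have "a < b" "c < d" using NC2D(1)[OF P] calculation by blast+
  ultimately show "\<not> (x < u \<and> u < y \<and> y < v)" using NC2D(3)[OF P, of a b c d] by auto
qed




lemma unseg_seg:
  assumes P: "P \<in> NC2 w"
  shows "unseg off (seg off len P) = {p\<in>P. off \<le> fst p \<and> snd p < off + len}"
proof -
  have "\<And>a b. (a,b) \<in> P \<Longrightarrow> a < b" using NC2D(1)[OF P] by blast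
  then have lt: "\<And>p. p \<in> P \<Longrightarrow> fst p < snd p" by force
  show ?thesis
  proof (rule set_eqI, rule iffI)
    fix x assume "x \<in> unseg off (seg off len P)"
    then obtain a b where ab: "(a,b) \<in> P" "off \<le> a" "b < off + len" "x = (a - off + off, b - off + off)"
      unfolding unseg_def seg_def by auto
    have "a < b" using lt[OF ab(1)] by simp
    then show "x \<in> {p\<in>P. off \<le> fst p \<and> snd p < off + len}" using ab by auto
  next
    fix x assume x: "x \<in> {p\<in>P. off \<le> fst p \<and> snd p < off + len}"
    obtain a b where ab: "x = (a,b)" by (cases x)
    have "a < b" using lt x ab by force
    hence "(a - off, b - off) \<in> seg off len P" unfolding seg_def using x ab by force
    moreover have "x = (\<lambda>(a,b). (a + off, b + off)) (a - off, b - off)" using x ab \<open>a < b\<close> by auto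
    ultimately show "x \<in> unseg off (seg off len P)" unfolding unseg_def by blast
  qed
qed

lemma decomp:
  assumes P: "P \<in> NC2 (c # Z)"
  obtains j where "(0,j) \<in> P" "0 < j" "j \<le> length Z" "Z ! (j-1) \<noteq> c"
   "seg 1 (j-1) P \<in> NC2 (take (j-1) Z)" "seg (Suc j) (length Z - j) P \<in> NC2 (drop j Z)"
   "P = insert (0,j) (unseg 1 (seg 1 (j-1) P) \<union> unseg (Suc j) (seg (Suc j) (length Z - j) P))"
   "\<And>j'. (0,j') \<in> P \<Longrightarrow> j' = j"
proof -
  let ?w = "c # Z"
  obtain p where p: "p \<in> P" "fst p = 0 \<or> snd p = 0" using NC2D(2)[OF P, of 0] by auto
  obtain a0 j where pj: "p = (a0, j)" by (cases p)
  have a0j: "a0 < j" "j < length ?w" "?w ! a0 \<noteq> ?w ! j" using NC2D(1)[OF P, of a0 j] p pj by auto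
  have a0: "a0 = 0" using p pj a0j by auto
  have inP: "(0,j) \<in> P" using p pj a0 by simp
  have j0: "0 < j" using a0j a0 by simp
  have jl: "j \<le> length Z" using a0j by simp
  have lett: "Z ! (j-1) \<noteq> c" using a0j a0 j0 by (cases j) auto
  have uniq: "\<And>a b k. (a,b) \<in> P \<Longrightarrow> (a = k \<or> b = k) \<Longrightarrow> (k = 0 \<or> k = j) \<Longrightarrow> (a,b) = (0,j)"
  proof -
    fix a b k assume ab: "(a,b) \<in> P" and h1: "a = k \<or> b = k" and h2: "k = 0 \<or> k = j"
    show "(a,b) = (0,j)" by (rule NC2_unique[OF P ab inP, of k]) (use h1 h2 in auto)
  qed
  have A: "\<And>a b. (a,b) \<in> P \<Longrightarrow> (a,b) = (0,j) \<or> (0 < a \<and> b < j) \<or> j < a"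
  proof -
    fix a b assume ab: "(a,b) \<in> P"
    have lt: "a < b" using NC2D(1)[OF P ab] by simp
    show "(a,b) = (0,j) \<or> (0 < a \<and> b < j) \<or> j < a"
    proof (cases "a = 0 \<or> a = j \<or> b = j")
      case True then show ?thesis using uniq[OF ab] by blast
    next
      case False
      have "\<not> (0 < a \<and> a < j \<and> j < b)" using NC2D(3)[OF P inP ab] by simp
      then show ?thesis using False lt by auto
    qed
  qed
  have inner: "seg 1 (j-1) P \<in> NC2 (take (j-1) (drop 1 ?w))"
  proof (rule seg_NC2[OF P])
    show "1 + (j - 1) \<le> length ?w" using jl by simp
  next
    fix a b assume ab: "(a,b) \<in> P" and h: "1 \<le> a \<and> a < 1 + (j - 1) \<or> 1 \<le> b \<and> b < 1 + (j - 1)"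
    show "1 \<le> a \<and> b < 1 + (j - 1)" using A[OF ab] h j0 NC2D(1)[OF P ab] by auto
  qed
  have rest: "seg (Suc j) (length Z - j) P \<in> NC2 (take (length Z - j) (drop (Suc j) ?w))"
  proof (rule seg_NC2[OF P])
    show "Suc j + (length Z - j) \<le> length ?w" using jl by simp
  next
    fix a b assume ab: "(a,b) \<in> P" and h: "Suc j \<le> a \<and> a < Suc j + (length Z - j) \<or> Suc j \<le> b \<and> b < Suc j + (length Z - j)"
    show "Suc j \<le> a \<and> b < Suc j + (length Z - j)" using A[OF ab] h j0 jl NC2D(1)[OF P ab] by auto
  qed
  have e1: "take (j-1) (drop 1 ?w) = take (j-1) Z" by simp
  have e2: "take (length Z - j) (drop (Suc j) ?w) = drop j Z" by simp
  have rec: "P = insert (0,j) (unseg 1 (seg 1 (j-1) P) \<union> unseg (Suc j) (seg (Suc j) (length Z - j) P))"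
  proof -
    have "unseg 1 (seg 1 (j-1) P) = {p\<in>P. 1 \<le> fst p \<and> snd p < 1 + (j-1)}" by (rule unseg_seg[OF P])
    moreover have "unseg (Suc j) (seg (Suc j) (length Z - j) P) = {p\<in>P. Suc j \<le> fst p \<and> snd p < Suc j + (length Z - j)}"
      by (rule unseg_seg[OF P])
    moreover have bl: "\<And>a b. (a,b) \<in> P \<Longrightarrow> b < Suc (length Z)"
      using NC2D(1)[OF P] by fastforce
    ultimately show ?thesis
    proof (intro set_eqI iffI)
      fix x assume x: "x \<in> P"
      obtain a b where ab: "x = (a,b)" by (cases x)
      have "(a,b) = (0,j) \<or> (0 < a \<and> b < j) \<or> j < a" using A x ab by simp
      moreover have "b < Suc (length Z)" using bl x ab by simp
      ultimately show "x \<in> insert (0,j) (unseg 1 (seg 1 (j-1) P) \<union> unseg (Suc j) (seg (Suc j) (length Z - j) P))"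
        using x ab jl j0 unseg_seg[OF P, of 1 "j-1"] unseg_seg[OF P, of "Suc j" "length Z - j"] by auto
    next
      fix x assume "x \<in> insert (0,j) (unseg 1 (seg 1 (j-1) P) \<union> unseg (Suc j) (seg (Suc j) (length Z - j) P))"
      then show "x \<in> P"
        using inP unseg_seg[OF P, of 1 "j-1"] unseg_seg[OF P, of "Suc j" "length Z - j"] by auto
    qed
  qed
  have u: "\<And>j'. (0,j') \<in> P \<Longrightarrow> j' = j" using uniq by blast
  show ?thesis using that[OF inP j0 jl lett inner[unfolded e1] rest[unfolded e2] rec u] .
qed


definition pj :: "(nat \<times> nat) set \<Rightarrow> nat" where
  "pj P = (THE j. (0,j) \<in> P)"

lemma pj_eq: "P \<in> NC2 (c # Z) \<Longrightarrow> (0,j) \<in> P \<Longrightarrow> pj P = j"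
  unfolding pj_def by (rule the_equality) (metis decomp)+

lemma card_decomp:
  "card (NC2 (c # Z)) \<le> (\<Sum>s | s < length Z \<and> Z ! s \<noteq> c. card (NC2 (take s Z)) * card (NC2 (drop (Suc s) Z)))"
proof -
  let ?I = "{s. s < length Z \<and> Z ! s \<noteq> c}"
  let ?B = "SIGMA s:?I. NC2 (take s Z) \<times> NC2 (drop (Suc s) Z)"
  let ?f = "\<lambda>P. (pj P - 1, seg 1 (pj P - 1) P, seg (Suc (pj P)) (length Z - pj P) P)"
  have fin: "finite ?B" by (intro finite_SigmaI finite_cartesian_product NC2_finite) auto
  have img: "?f ` NC2 (c # Z) \<subseteq> ?B"
  proof
    fix x assume "x \<in> ?f ` NC2 (c # Z)"
    then obtain P where P: "P \<in> NC2 (c # Z)" and x: "x = ?f P" by blast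
    obtain j where j: "(0,j) \<in> P" "0 < j" "j \<le> length Z" "Z ! (j-1) \<noteq> c"
       "seg 1 (j-1) P \<in> NC2 (take (j-1) Z)" "seg (Suc j) (length Z - j) P \<in> NC2 (drop j Z)"
      using decomp[OF P] by metis
    have "pj P = j" using pj_eq[OF P j(1)] .
    then show "x \<in> ?B" using x j by auto
  qed
  have inj: "inj_on ?f (NC2 (c # Z))"
  proof (rule inj_onI)
    fix P Q assume P: "P \<in> NC2 (c # Z)" and Q: "Q \<in> NC2 (c # Z)" and eq: "?f P = ?f Q"
    obtain j where j: "(0,j) \<in> P" "0 < j"
      "P = insert (0,j) (unseg 1 (seg 1 (j-1) P) \<union> unseg (Suc j) (seg (Suc j) (length Z - j) P))"
      using decomp[OF P] by metis
    obtain k where k: "(0,k) \<in> Q" "0 < k"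
      "Q = insert (0,k) (unseg 1 (seg 1 (k-1) Q) \<union> unseg (Suc k) (seg (Suc k) (length Z - k) Q))"
      using decomp[OF Q] by metis
    have pjP: "pj P = j" using pj_eq[OF P j(1)] .
    have pjQ: "pj Q = k" using pj_eq[OF Q k(1)] .
    have "j - 1 = k - 1" using eq pjP pjQ by simp
    hence "j = k" using j(2) k(2) by simp
    then show "P = Q" using eq pjP pjQ j(3) k(3) by simp
  qed
  have "card (NC2 (c # Z)) \<le> card ?B" by (rule card_inj_on_le[OF inj img fin])
  also have "card ?B = (\<Sum>s\<in>?I. card (NC2 (take s Z) \<times> NC2 (drop (Suc s) Z)))"
    by (rule card_SigmaI) (auto intro: finite_cartesian_product NC2_finite)
  also have "\<dots> = (\<Sum>s\<in>?I. card (NC2 (take s Z)) * card (NC2 (drop (Suc s) Z)))"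
    by (simp add: card_cartesian_product)
  finally show ?thesis .
qed



definition rf :: "nat \<Rightarrow> nat \<times> nat \<Rightarrow> nat \<times> nat" where
  "rf L p = (if fst p = 0 then (snd p - 1, L) else (fst p - 1, snd p - 1))"

lemma rf_inj: "inj_on (rf L) {(a,b). a < b \<and> b < Suc L}"
  unfolding rf_def by (rule inj_onI) (auto split: if_splits)

lemma rf_contains:
  assumes "a < b" "b < Suc L" "k < Suc L"
  shows "(fst (rf L (a,b)) = k \<or> snd (rf L (a,b)) = k) \<longleftrightarrow> (a = (if k = L then 0 else Suc k) \<or> b = (if k = L then 0 else Suc k))"
  using assms unfolding rf_def by auto

lemma rot_NC2:
  assumes P: "P \<in> NC2 (x # Z)"
  shows "rf (length Z) ` P \<in> NC2 (Z @ [x])"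
proof (rule NC2I)
  let ?L = "length Z"
  fix u v assume "(u,v) \<in> rf ?L ` P"
  then obtain a b where ab: "(a,b) \<in> P" "(u,v) = rf ?L (a,b)" by auto
  have h: "a < b" "b < Suc ?L" "(x#Z) ! a \<noteq> (x#Z) ! b" using NC2D(1)[OF P ab(1)] by auto
  show "u < v \<and> v < length (Z @ [x]) \<and> (Z @ [x]) ! u \<noteq> (Z @ [x]) ! v"
  proof (cases "a = 0")
    case True
    then obtain b' where b': "b = Suc b'" using h by (cases b) auto
    then show ?thesis using ab h True unfolding rf_def by (auto simp: nth_append)
  next
    case False
    then obtain a' where a': "a = Suc a'" by (cases a) auto
    obtain b' where b': "b = Suc b'" using h by (cases b) auto
    show ?thesis using ab h False a' b' unfolding rf_def by (auto simp: nth_append)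
  qed
next
  let ?L = "length Z"
  fix k assume k: "k < length (Z @ [x])"
  hence k': "k < Suc ?L" by simp
  define k2 where "k2 = (if k = ?L then 0 else Suc k)"
  have k2l: "k2 < length (x # Z)" unfolding k2_def using k' by auto
  obtain p where p: "p \<in> P" "fst p = k2 \<or> snd p = k2" using NC2D(2)[OF P k2l] by blast
  obtain a b where pab: "p = (a,b)" by (cases p)
  have hp: "a < b" "b < Suc ?L" using NC2D(1)[OF P, of a b] p pab by auto
  have c1: "fst (rf ?L (a,b)) = k \<or> snd (rf ?L (a,b)) = k"
    using rf_contains[OF hp k'] p pab k2_def by auto
  show "\<exists>!q. q \<in> rf ?L ` P \<and> (fst q = k \<or> snd q = k)"
  proof (rule ex1I[of _ "rf ?L (a,b)"])
    show "rf ?L (a,b) \<in> rf ?L ` P \<and> (fst (rf ?L (a,b)) = k \<or> snd (rf ?L (a,b)) = k)"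
      using p pab c1 by auto
  next
    fix q assume q: "q \<in> rf ?L ` P \<and> (fst q = k \<or> snd q = k)"
    then obtain c d where cd: "(c,d) \<in> P" "q = rf ?L (c,d)" by auto
    have hq: "c < d" "d < Suc ?L" using NC2D(1)[OF P cd(1)] by auto
    have "c = k2 \<or> d = k2" using rf_contains[OF hq k'] q cd k2_def by auto
    hence "(c,d) = p" using NC2_unique[OF P cd(1) p(1), of k2] p(2) by auto
    then show "q = rf ?L (a,b)" using cd pab by simp
  qed
next
  let ?L = "length Z"
  fix x1 y1 x2 y2 assume "(x1,y1) \<in> rf ?L ` P" "(x2,y2) \<in> rf ?L ` P"
  then obtain a b c d where ab: "(a,b) \<in> P" "(x1,y1) = rf ?L (a,b)"
     and cd: "(c,d) \<in> P" "(x2,y2) = rf ?L (c,d)" by fastforce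
  have h1: "a < b" "b < Suc ?L" using NC2D(1)[OF P ab(1)] by auto
  have h2: "c < d" "d < Suc ?L" using NC2D(1)[OF P cd(1)] by auto
  show "\<not> (x1 < x2 \<and> x2 < y1 \<and> y1 < y2)"
  proof (cases "a = 0")
    case a0: True
    show ?thesis
    proof (cases "c = 0")
      case True
      have "(a,b) = (c,d)" using NC2_unique[OF P ab(1) cd(1), of 0] a0 True by auto
      then have "(x1,y1) = (x2,y2)" using ab cd by simp
      then show ?thesis by simp
    next
      case False
      then show ?thesis using ab cd a0 h1 h2 unfolding rf_def by auto
    qed
  next
    case a0: False
    show ?thesis
    proof (cases "c = 0")
      case True
      have "\<not> (0 < a \<and> a < d \<and> d < b)" using NC2D(3)[OF P cd(1) ab(1)] True by simp
      then show ?thesis using ab cd a0 True h1 h2 unfolding rf_def by auto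
    next
      case False
      have "\<not> (a < c \<and> c < b \<and> b < d)" using NC2D(3)[OF P ab(1) cd(1)] by simp
      then show ?thesis using ab cd a0 False h1 h2 unfolding rf_def by auto
    qed
  qed
qed

lemma card_rot: "card (NC2 (x # Z)) \<le> card (NC2 (Z @ [x]))"
proof (rule card_inj_on_le[OF _ _ NC2_finite])
  let ?U = "{(a,b). a < b \<and> b < Suc (length Z)}"
  have sub: "\<And>P. P \<in> NC2 (x # Z) \<Longrightarrow> P \<subseteq> ?U" using NC2D(1) by fastforce
  show "inj_on (\<lambda>P. rf (length Z) ` P) (NC2 (x # Z))"
    using inj_on_image_eq_iff[OF rf_inj sub sub] by (auto intro!: inj_onI)
  show "(\<lambda>P. rf (length Z) ` P) ` NC2 (x # Z) \<subseteq> NC2 (Z @ [x])"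
    using rot_NC2 by blast
qed




definition psum :: "bool list \<Rightarrow> int" where
  "psum xs = (\<Sum>b\<leftarrow>xs. if b then 1 else -1)"

lemma psum_simps[simp]: "psum [] = 0" "psum (x # xs) = (if x then 1 else -1) + psum xs"
  "psum (xs @ ys) = psum xs + psum ys"
  unfolding psum_def by auto

lemma psum_rep_True[simp]: "psum (replicate n True) = int n"
  by (induction n) auto

lemma psum_noTrue: "True \<notin> set xs \<Longrightarrow> psum xs = - int (length xs)"
  by (induction xs) auto

lemma path_pos_psum: "path_pos S k = psum (take k S)"
  unfolding path_pos_def psum_def by simp

definition hb :: "nat \<Rightarrow> bool list \<Rightarrow> bool" where
  "hb h w \<longleftrightarrow> (\<exists>lo. \<forall>k \<le> length w. lo \<le> psum (take k w) \<and> psum (take k w) \<le> lo + int h)"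

lemma hb_all:
  assumes "\<forall>k \<le> length w. lo \<le> psum (take k w) \<and> psum (take k w) \<le> lo + int h"
  shows "lo \<le> psum (take n w) \<and> psum (take n w) \<le> lo + int h"
proof (cases "n \<le> length w")
  case True then show ?thesis using assms by blast
next
  case False
  then have "take n w = take (length w) w" by simp
  then show ?thesis using assms by (metis order_refl)
qed

lemma hb_take: "hb h w \<Longrightarrow> hb h (take b w)"
  unfolding hb_def by (metis take_take hb_all)

lemma hb_drop: "hb h w \<Longrightarrow> hb h (drop a w)"
proof -
  assume "hb h w"
  then obtain lo where lo: "\<forall>k \<le> length w. lo \<le> psum (take k w) \<and> psum (take k w) \<le> lo + int h"
    unfolding hb_def by blast
  have "\<forall>k \<le> length (drop a w). lo - psum (take a w) \<le> psum (take k (drop a w)) \<and> psum (take k (drop a w)) \<le> lo - psum (take a w) + int h"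
  proof (intro allI impI)
    fix k
    have "psum (take (a + k) w) = psum (take a w) + psum (take k (drop a w))"
      by (simp add: take_add)
    then show "lo - psum (take a w) \<le> psum (take k (drop a w)) \<and> psum (take k (drop a w)) \<le> lo - psum (take a w) + int h"
      using hb_all[OF lo, of "a+k"] by simp
  qed
  then show ?thesis unfolding hb_def by blast
qed

lemma hb_rot:
  assumes hb: "hb h (False # Z)" and bal: "psum (False # Z) = 0"
  shows "hb h (Z @ [False])"
proof -
  obtain lo where lo: "\<forall>k \<le> length (False # Z). lo \<le> psum (take k (False # Z)) \<and> psum (take k (False # Z)) \<le> lo + int h"
    using hb unfolding hb_def by blast
  have "\<forall>k \<le> length (Z @ [False]). lo + 1 \<le> psum (take k (Z @ [False])) \<and> psum (take k (Z @ [False])) \<le> lo + 1 + int h"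
  proof (intro allI impI)
    fix k assume k: "k \<le> length (Z @ [False])"
    show "lo + 1 \<le> psum (take k (Z @ [False])) \<and> psum (take k (Z @ [False])) \<le> lo + 1 + int h"
    proof (cases "k \<le> length Z")
      case True
      have "psum (take (Suc k) (False # Z)) = -1 + psum (take k Z)" by simp
      then show ?thesis using lo True by (auto dest!: spec[of _ "Suc k"])
    next
      case False
      then have "take k (Z @ [False]) = Z @ [False]" using k by simp
      moreover have "psum Z = 1" using bal by simp
      moreover have "lo \<le> -1" using lo[rule_format, of 1] by simp
      moreover have "0 \<le> lo + int h" using lo[rule_format, of 0] by simp
      ultimately show ?thesis by simp
    qed
  qed
  then show ?thesis unfolding hb_def by blast
qed

lemma hb_run: "hb h (replicate n True @ Y) \<Longrightarrow> n \<le> h"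
proof -
  assume "hb h (replicate n True @ Y)"
  then obtain lo where lo: "\<forall>k \<le> length (replicate n True @ Y). lo \<le> psum (take k (replicate n True @ Y)) \<and> psum (take k (replicate n True @ Y)) \<le> lo + int h"
    unfolding hb_def by blast
  have "lo \<le> 0" using lo[rule_format, of 0] by simp
  moreover have "int n \<le> lo + int h" using lo[rule_format, of n] by simp
  ultimately show ?thesis by simp
qed

fun rho :: "bool list \<Rightarrow> nat" where
  "rho [] = 0"
| "rho (x # xs) = (if x \<and> (xs = [] \<or> \<not> hd xs) then 1 else 0) + rho xs"

lemma rho_False[simp]: "rho (False # B) = rho B" by simp

lemma rho_append_F: "rho (A @ False # B) = rho A + rho B"
proof (induction A)
  case Nil then show ?case by simp
next
  case (Cons a A) then show ?case by (cases A) auto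
qed

lemma rho_snoc_F: "rho (A @ [False]) = rho A"
  using rho_append_F[of A "[]"] by simp

lemma rho_pos: "True \<in> set D \<Longrightarrow> rho D \<ge> 1"
proof (induction D)
  case Nil then show ?case by simp
next
  case (Cons a D) then show ?case by (cases D) auto
qed

lemma rho_run: "n \<ge> 1 \<Longrightarrow> (Y = [] \<or> \<not> hd Y) \<Longrightarrow> rho (replicate n True @ Y) = Suc (rho Y)"
proof (induction n)
  case 0 then show ?case by simp
next
  case (Suc n) then show ?case by (cases n) auto
qed

lemma NC2_bal: "P \<in> NC2 w \<Longrightarrow> psum w = 0"
proof (induction "length w" arbitrary: w P rule: less_induct)
  case less
  show ?case
  proof (cases w)
    case Nil then show ?thesis by simp
  next
    case (Cons c Z)
    obtain j where j: "0 < j" "j \<le> length Z" "Z ! (j-1) \<noteq> c"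
       "seg 1 (j-1) P \<in> NC2 (take (j-1) Z)" "seg (Suc j) (length Z - j) P \<in> NC2 (drop j Z)"
      using decomp[OF less.prems[unfolded Cons]] by metis
    have p1: "psum (take (j-1) Z) = 0" by (rule less.hyps[OF _ j(4)]) (use Cons j in auto)
    have p2: "psum (drop j Z) = 0" by (rule less.hyps[OF _ j(5)]) (use Cons j in auto)
    have "Z = take (j-1) Z @ Z ! (j-1) # drop j Z"
      using id_take_nth_drop[of "j-1" Z] j by simp
    then have "psum Z = psum (take (j-1) Z) + (if Z ! (j-1) then 1 else -1) + psum (drop j Z)"
      by (metis psum_simps(2,3) add.assoc)
    then show ?thesis using Cons p1 p2 j(3) by (cases c) auto
  qed
qed




lemma card_NC2_Nil: "card (NC2 []) = 1" by (simp add: NC2_Nil)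

lemma step_k:
  fixes h k' :: nat and Y :: "bool list"
  assumes IH: "\<And>k Y. k + length Y < Suc k' + length Y0 \<Longrightarrow> psum (replicate k True @ Y) = 0 \<Longrightarrow>
      hb h (replicate k True @ Y) \<Longrightarrow> card (NC2 (replicate k True @ Y)) \<le> G h (Suc k) (rho Y)"
    and Y: "Y = Y0"
    and bal: "psum (replicate (Suc k') True @ Y) = 0"
    and hbW: "hb h (replicate (Suc k') True @ Y)"
  shows "card (NC2 (replicate (Suc k') True @ Y)) \<le> G h (Suc (Suc k')) (rho Y)"
proof -
  let ?Z = "replicate k' True @ Y"
  let ?W = "replicate (Suc k') True @ Y"
  have W: "?W = True # ?Z" by simp
  define F where "F t = card (NC2 (replicate k' True @ take t Y)) * card (NC2 (drop (Suc t) Y))" for t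
  define J where "J = {t. t < length Y \<and> \<not> Y ! t}"
  have I: "{s. s < length ?Z \<and> ?Z ! s \<noteq> True} = (\<lambda>t. k' + t) ` J"
  proof (intro set_eqI iffI)
    fix s assume s: "s \<in> {s. s < length ?Z \<and> ?Z ! s \<noteq> True}"
    then have "\<not> s < k'" by (auto simp: nth_append)
    then obtain t where "s = k' + t" by (metis le_Suc_ex not_less)
    then show "s \<in> (\<lambda>t. k' + t) ` J" using s unfolding J_def by (auto simp: nth_append)
  next
    fix s assume "s \<in> (\<lambda>t. k' + t) ` J"
    then show "s \<in> {s. s < length ?Z \<and> ?Z ! s \<noteq> True}" unfolding J_def by (auto simp: nth_append)
  qed
  have "card (NC2 ?W) \<le> (\<Sum>s | s < length ?Z \<and> ?Z ! s \<noteq> True. card (NC2 (take s ?Z)) * card (NC2 (drop (Suc s) ?Z)))"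
    unfolding W by (rule card_decomp)
  also have "\<dots> = (\<Sum>t\<in>J. card (NC2 (take (k' + t) ?Z)) * card (NC2 (drop (Suc (k' + t)) ?Z)))"
    unfolding I by (simp add: sum.reindex inj_on_def)
  also have "\<dots> = (\<Sum>t\<in>J. F t)"
    unfolding F_def by (rule sum.cong) auto
  finally have c1: "card (NC2 ?W) \<le> (\<Sum>t\<in>J. F t)" .
  define J' where "J' = {t\<in>J. F t \<noteq> 0}"
  have finJ: "finite J" unfolding J_def by simp
  have c2: "(\<Sum>t\<in>J. F t) = (\<Sum>t\<in>J'. F t)"
    unfolding J'_def by (rule sum.mono_neutral_right) (use finJ in auto)
  define jt where "jt t = rho (take t Y)" for t
  define g where "g j = G h (Suc k') j * G h 1 (rho Y - j)" for j
  have facts: "\<And>t. t \<in> J' \<Longrightarrow> psum (replicate k' True @ take t Y) = 0 \<and> F t \<le> g (jt t) \<and> jt t \<le> rho Y"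
  proof -
    fix t assume t: "t \<in> J'"
    then have tl: "t < length Y" "\<not> Y ! t" "F t \<noteq> 0" unfolding J'_def J_def by auto
    have ne1: "NC2 (replicate k' True @ take t Y) \<noteq> {}" using tl(3) unfolding F_def by auto
    have ne2: "NC2 (drop (Suc t) Y) \<noteq> {}" using tl(3) unfolding F_def by auto
    have b1: "psum (replicate k' True @ take t Y) = 0" using ne1 NC2_bal by blast
    have b2: "psum (drop (Suc t) Y) = 0" using ne2 NC2_bal by blast
    have e1: "replicate k' True @ take t Y = take (k' + t) (drop 1 ?W)" by (simp add: take_append)
    have e2: "drop (Suc t) Y = drop (Suc k' + Suc t) ?W" by simp
    have h1: "hb h (replicate k' True @ take t Y)" unfolding e1 by (intro hb_take hb_drop hbW)
    have "hb h (drop (Suc t) Y)" using hb_drop[OF hbW, of "Suc k' + Suc t"] unfolding e2[symmetric] .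
    hence h2: "hb h (replicate 0 True @ drop (Suc t) Y)" by simp
    have i1: "card (NC2 (replicate k' True @ take t Y)) \<le> G h (Suc k') (rho (take t Y))"
      by (rule IH[OF _ b1 h1]) (use tl Y in simp)
    have i2: "card (NC2 (replicate 0 True @ drop (Suc t) Y)) \<le> G h (Suc 0) (rho (drop (Suc t) Y))"
      by (rule IH[OF _ _ h2]) (use tl Y b2 in simp_all)
    have YY: "Y = take t Y @ False # drop (Suc t) Y"
      using id_take_nth_drop[OF tl(1)] tl(2) by simp
    have rr: "rho Y = rho (take t Y) + rho (drop (Suc t) Y)"
      by (subst YY) (rule rho_append_F)
    have "F t \<le> g (jt t)" unfolding F_def g_def jt_def using i1 i2 rr by (simp add: mult_le_mono)
    then show "psum (replicate k' True @ take t Y) = 0 \<and> F t \<le> g (jt t) \<and> jt t \<le> rho Y"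
      using b1 rr unfolding jt_def by simp
  qed
  have inj: "inj_on jt J'"
  proof -
    have less: "jt t1 < jt t2" if t1: "t1 \<in> J'" and t2: "t2 \<in> J'" and lt: "t1 < t2" for t1 t2
    proof -
      have tl1: "t1 < length Y" "\<not> Y ! t1" using t1 unfolding J'_def J_def by auto
      have tl2: "t2 < length Y" using t2 unfolding J'_def J_def by auto
      have p1: "psum (take t1 Y) = - int k'" using facts[OF t1] by simp
      have p2: "psum (take t2 Y) = - int k'" using facts[OF t2] by simp
      define D where "D = take (t2 - t1) (drop t1 Y)"
      have tk: "take t2 Y = take t1 Y @ D" unfolding D_def using lt
        by (metis le_add_diff_inverse less_imp_le_nat take_add)
      have pD: "psum D = 0" using p1 p2 tk by simp
      define E where "E = take (t2 - Suc t1) (drop (Suc t1) Y)"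
      have dr: "drop t1 Y = False # drop (Suc t1) Y" using Cons_nth_drop_Suc[OF tl1(1)] tl1(2) by simp
      have tt: "t2 - t1 = Suc (t2 - Suc t1)" using lt by simp
      have D1: "D = False # E" unfolding D_def E_def dr tt by simp
      have "psum E = 1" using pD D1 by simp
      hence "True \<in> set E" using psum_noTrue by fastforce
      hence "rho E \<ge> 1" by (rule rho_pos)
      moreover have "rho (take t2 Y) = rho (take t1 Y) + rho E"
        using tk D1 rho_append_F by simp
      ultimately show ?thesis unfolding jt_def by simp
    qed
    show ?thesis
    proof (rule inj_onI, rule ccontr)
      fix t1 t2 assume "t1 \<in> J'" "t2 \<in> J'" "jt t1 = jt t2" "t1 \<noteq> t2"
      then show False using less by (metis less_irrefl linorder_neqE_nat)
    qed
  qed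
  have "(\<Sum>t\<in>J'. F t) \<le> (\<Sum>t\<in>J'. g (jt t))"
    by (rule sum_mono) (use facts in blast)
  also have "\<dots> = (\<Sum>j\<in>jt ` J'. g j)"
    by (simp add: sum.reindex[OF inj])
  also have "\<dots> \<le> (\<Sum>j\<le>rho Y. g j)"
    by (rule sum_mono2) (use facts in auto)
  also have "\<dots> = G h (Suc k' + 1) (rho Y)"
    unfolding g_def by (rule G_conv[symmetric])
  finally show ?thesis using c1 c2 by simp
qed


lemma main:
  "psum (replicate k True @ Y) = 0 \<Longrightarrow> hb h (replicate k True @ Y) \<Longrightarrow>
   card (NC2 (replicate k True @ Y)) \<le> G h (Suc k) (rho Y)"
proof (induction "k + length Y" arbitrary: k Y rule: less_induct)
  case less
  have K: "card (NC2 (replicate k' True @ Y')) \<le> G h (Suc k') (rho Y')"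
    if eq: "k' + length Y' = k + length Y" and k1: "k' \<ge> 1"
      and b: "psum (replicate k' True @ Y') = 0" and hh: "hb h (replicate k' True @ Y')" for k' Y'
  proof -
    obtain k'' where kk: "k' = Suc k''" using k1 by (cases k') auto
    have "card (NC2 (replicate (Suc k'') True @ Y')) \<le> G h (Suc (Suc k'')) (rho Y')"
    proof (rule step_k[where Y0 = Y', OF _ refl])
      fix k2 Y2 assume "k2 + length Y2 < Suc k'' + length Y'" "psum (replicate k2 True @ Y2) = 0"
        "hb h (replicate k2 True @ Y2)"
      then show "card (NC2 (replicate k2 True @ Y2)) \<le> G h (Suc k2) (rho Y2)"
        using less.hyps eq kk by simp
    qed (use b hh kk in auto)
    then show ?thesis using kk by simp
  qed
  have A: "card (NC2 Y') \<le> G h 1 (rho Y')"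
    if eq: "length Y' = k + length Y" and st: "Y' = [] \<or> hd Y'"
      and b: "psum Y' = 0" and hh: "hb h Y'" for Y'
  proof (cases "Y' = []")
    case True then show ?thesis by (simp add: card_NC2_Nil)
  next
    case False
    then have hdY: "hd Y'" using st by simp
    define n where "n = length (takeWhile id Y')"
    define Y2 where "Y2 = dropWhile id Y'"
    have tw: "takeWhile id Y' = replicate n True"
      unfolding n_def by (rule replicate_length_same[symmetric]) (auto dest: set_takeWhileD)
    have Yd: "Y' = replicate n True @ Y2" unfolding Y2_def using takeWhile_dropWhile_id[of id Y'] tw by simp
    have n1: "n \<ge> 1" using False hdY unfolding n_def by (cases Y') auto
    have Y2s: "Y2 = [] \<or> \<not> hd Y2" unfolding Y2_def using hd_dropWhile[of id Y'] by auto
    have c: "card (NC2 (replicate n True @ Y2)) \<le> G h (Suc n) (rho Y2)"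
      by (rule K) (use eq Yd n1 b hh in auto)
    have nh: "n \<le> h" using hb_run hh Yd by metis
    have "G h (Suc n) (rho Y2) \<le> G h (Suc h) (rho Y2)" by (rule G_mono_q') (use nh in simp)
    also have "\<dots> = G h 1 (Suc (rho Y2))" by simp
    also have "Suc (rho Y2) = rho Y'" using rho_run[OF n1 Y2s] Yd by simp
    finally show ?thesis using c Yd by simp
  qed
  have B: "card (NC2 Y') \<le> G h 1 (rho Y')"
    if eq: "length Y' = k + length Y" and m: "length (takeWhile Not Y') = m"
      and b: "psum Y' = 0" and hh: "hb h Y'" for m Y'
    using that
  proof (induction m arbitrary: Y')
    case 0
    then have "Y' = [] \<or> hd Y'" by (cases Y') (auto split: if_splits)
    then show ?case using A 0 by blast
  next
    case (Suc m)
    obtain Z where YZ: "Y' = False # Z" using Suc.prems(2) by (cases Y') (auto split: if_splits)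
    have pZ: "psum Z = 1" using Suc.prems(3) YZ by simp
    hence "True \<in> set Z" using psum_noTrue by fastforce
    hence "takeWhile Not (Z @ [False]) = takeWhile Not Z" by (simp add: takeWhile_append1)
    hence tw: "length (takeWhile Not (Z @ [False])) = m" using Suc.prems(2) YZ by simp
    have "card (NC2 (Z @ [False])) \<le> G h 1 (rho (Z @ [False]))"
      by (rule Suc.IH[OF _ tw]) (use Suc.prems YZ pZ hb_rot in auto)
    then show ?case using card_rot[of False Z] YZ rho_snoc_F[of Z] by simp
  qed
  show ?case
  proof (cases k)
    case 0
    then show ?thesis using B[of Y] less.prems by simp
  next
    case (Suc k1)
    then show ?thesis using K[of k Y] less.prems by simp
  qed
qed




lemma run_word_Suc: "run_word (Suc r) n m = run_word r n m @ (replicate (n r) True @ replicate (m r) False)"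
  unfolding run_word_def by simp

lemma psum_rep_False[simp]: "psum (replicate k False) = - int k"
  by (induction k) auto

lemma rho_rep_False[simp]: "rho (replicate k False) = 0"
  by (induction k) auto

lemma psum_run_word: "psum (run_word r n m) = int (\<Sum>j<r. n j) - int (\<Sum>j<r. m j)"
  by (induction r) (auto simp: run_word_Suc run_word_def[of 0])

lemma rho_append_lastF: "A \<noteq> [] \<Longrightarrow> \<not> last A \<Longrightarrow> rho (A @ B) = rho A + rho B"
proof -
  assume a: "A \<noteq> []" "\<not> last A"
  then have A: "A = butlast A @ [False]" by (metis append_butlast_last_id)
  have "rho (A @ B) = rho (butlast A @ False # B)" by (subst A) simp
  also have "\<dots> = rho (butlast A) + rho B" by (rule rho_append_F)
  also have "rho (butlast A) = rho A" by (subst (2) A) (simp add: rho_snoc_F)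
  finally show ?thesis .
qed

lemma rho_run_word: "\<forall>j<r. n j \<ge> 1 \<and> m j \<ge> 1 \<Longrightarrow> rho (run_word r n m) = r"
proof (induction r)
  case 0 then show ?case by (simp add: run_word_def)
next
  case (Suc r)
  have blk: "rho (replicate (n r) True @ replicate (m r) False) = 1"
    using rho_run[of "n r" "replicate (m r) False"] Suc.prems by (cases "m r") auto
  show ?case
  proof (cases "r = 0")
    case True then show ?thesis using blk by (simp add: run_word_def)
  next
    case False
    then obtain r' where r': "r = Suc r'" by (cases r) auto
    have "m r' \<ge> 1" using Suc.prems r' by (auto dest: spec[of _ r'])
    then obtain mm where mm: "m r' = Suc mm" by (cases "m r'") auto
    have ne: "run_word r n m \<noteq> []" "\<not> last (run_word r n m)"
      using mm r' by (auto simp: run_word_Suc last_append)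
    show ?thesis using rho_append_lastF[OF ne] Suc blk by (simp add: run_word_Suc)
  qed
qed

lemma hb_height: "hb (lp_height S) S"
proof -
  let ?V = "path_pos S ` {0..length S}"
  have fin: "finite ?V" and ne: "?V \<noteq> {}" by auto
  have mm: "Min ?V \<le> Max ?V" using fin ne by simp
  have "\<forall>k \<le> length S. Min ?V \<le> psum (take k S) \<and> psum (take k S) \<le> Min ?V + int (lp_height S)"
  proof (intro allI impI)
    fix k assume "k \<le> length S"
    then have "path_pos S k \<in> ?V" by auto
    then have "Min ?V \<le> path_pos S k" "path_pos S k \<le> Max ?V" using fin by auto
    then show "Min ?V \<le> psum (take k S) \<and> psum (take k S) \<le> Min ?V + int (lp_height S)"
      unfolding lp_height_def path_pos_psum using mm by simp
  qed
  then show ?thesis unfolding hb_def by blast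
qed

theorem lemma3p4:
  fixes r :: nat and n m :: "nat \<Rightarrow> nat"
  assumes "r \<ge> 1"
    and "\<forall>j<r. n j \<ge> 1 \<and> m j \<ge> 1"
    and "(\<Sum>j<r. n j) = (\<Sum>j<r. m j)"
  shows "real (card (NC2 (run_word r n m))) \<le> fuss_catalan (lp_height (run_word r n m)) r
       \<and> fuss_catalan (lp_height (run_word r n m)) r
           \<le> real r ^ (r - 1) / fact r * (1 + real (lp_height (run_word r n m))) ^ (r - 1)"
proof
  let ?S = "run_word r n m"
  let ?h = "lp_height ?S"
  have b: "psum (replicate 0 True @ ?S) = 0" using psum_run_word[of r n m] assms(3) by simp
  have hh: "hb ?h (replicate 0 True @ ?S)" using hb_height[of ?S] by simp
  have "card (NC2 (replicate 0 True @ ?S)) \<le> G ?h 1 (rho ?S)" using main[OF b hh] by simp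
  then have "card (NC2 ?S) \<le> G ?h 1 r" using rho_run_word[OF assms(2)] by simp
  then have "real (card (NC2 ?S)) \<le> real (G ?h 1 r)" by simp
  then show "real (card (NC2 ?S)) \<le> fuss_catalan ?h r" using G_fuss[of ?h r] by linarith
next
  show "fuss_catalan (lp_height (run_word r n m)) r
           \<le> real r ^ (r - 1) / fact r * (1 + real (lp_height (run_word r n m))) ^ (r - 1)"
    by (rule fuss_bound[OF assms(1)])
qed


end
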